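(* Let $\mathcal F=\{F^c_{t,k}\}$ be an F-system and $R,\lambda$ reals such that $|F^A_t\cup F^B_t|\le Rt+\lambda$ for every positive integer $t$. Then for every positive integer $t$, $|S_{2t,t}|\ge(6-4R)t-2\lambda$.
   Context: F-system: a family $\mathcal F=\{F^c_{t,k}\}$ of sets of positive integers, indexed by $c\in\{A,B\}$ and integers $0<k\le t$, such that (F1) $|F^c_{t,k}|\ge k$ for all $c,t,k$; and (F2) $F^A_{t,k}\cap F^B_{t',k'}=\emptyset$ for all $k\le t$, $k'\le t'$ with $k+k'\le\max(t,t')$. Notation: $F^c_t=\bigcup_{0<\kappa\le\tau\le t}F^c_{\tau,\kappa}$ for $c\in\{A,B\}$; $S_t=F^A_t\cap F^B_t$; $S_{2t,t}=S_{2t}\cap(F^A_{2t,t}\cup F^B_{2t,t})$. *)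

theory Defs
  imports Complex_Main
begin

datatype col = A | B

text \<open>An F-system: F c t k is the set F^c_{t,k}; only indices 0 < k \<le> t matter.
  Cardinality condition (F1) is read as |X| \<ge> k, where an infinite set has
  cardinality \<ge> k automatically.\<close>
definition F_system :: "(col \<Rightarrow> nat \<Rightarrow> nat \<Rightarrow> nat set) \<Rightarrow> bool" where
  "F_system F \<longleftrightarrow>
     (\<forall>c t k. 0 < k \<and> k \<le> t \<longrightarrow>
        F c t k \<subseteq> {0<..} \<and> (finite (F c t k) \<longrightarrow> k \<le> card (F c t k))) \<and>
     (\<forall>t k t' k'. 0 < k \<and> k \<le> t \<and> 0 < k' \<and> k' \<le> t' \<and> k + k' \<le> max t t'
        \<longrightarrow> F A t k \<inter> F B t' k' = {})"

definition Fu :: "(col \<Rightarrow> nat \<Rightarrow> nat \<Rightarrow> nat set) \<Rightarrow> col \<Rightarrow> nat \<Rightarrow> nat set" where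
  "Fu F c t = (\<Union>{F c \<tau> \<kappa> | \<tau> \<kappa>. 0 < \<kappa> \<and> \<kappa> \<le> \<tau> \<and> \<tau> \<le> t})"

definition S :: "(col \<Rightarrow> nat \<Rightarrow> nat \<Rightarrow> nat set) \<Rightarrow> nat \<Rightarrow> nat set" where
  "S F t = Fu F A t \<inter> Fu F B t"

definition S2 :: "(col \<Rightarrow> nat \<Rightarrow> nat \<Rightarrow> nat set) \<Rightarrow> nat \<Rightarrow> nat set" where
  "S2 F t = S F (2*t) \<inter> (F A (2*t) t \<union> F B (2*t) t)"

end

theory Submission
  imports Defs
begin

lemma sub_Fu: "0 < k \<Longrightarrow> k \<le> t \<Longrightarrow> F c t k \<subseteq> Fu F c t"
  unfolding Fu_def by blast

lemma card_ge:
  assumes "F_system F" "0 < k" "k \<le> t" "F c t k \<subseteq> U" "finite U"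
  shows "k \<le> card (F c t k)"
  using assms unfolding F_system_def by (meson finite_subset)

theorem lemma3:
  fixes F :: "col \<Rightarrow> nat \<Rightarrow> nat \<Rightarrow> nat set" and R lam :: real
  assumes "F_system F"
    and "\<forall>t::nat. 0 < t \<longrightarrow> finite (Fu F A t \<union> Fu F B t) \<and>
            real (card (Fu F A t \<union> Fu F B t)) \<le> R * real t + lam"
  shows "\<forall>t::nat. 0 < t \<longrightarrow> real (card (S2 F t)) \<ge> (6 - 4*R) * real t - 2*lam"
proof (intro allI impI)
  fix t :: nat assume t: "0 < t"
  define FA where "FA = Fu F A (2*t)"
  define FB where "FB = Fu F B (2*t)"
  define X where "X = F A (2*t) t"
  define Y where "Y = F B (2*t) t"
  define U where "U = FA \<union> FB"
  have fin: "finite U" and bnd: "real (card U) \<le> R * real (2*t) + lam"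
    using assms(2)[rule_format, of "2*t"] t unfolding U_def FA_def FB_def by auto
  have finA: "finite FA" "finite FB" using fin unfolding U_def by auto
  have XA: "X \<subseteq> FA" unfolding X_def FA_def using t by (intro sub_Fu) auto
  have YB: "Y \<subseteq> FB" unfolding Y_def FB_def using t by (intro sub_Fu) auto
  have XY: "X \<inter> Y = {}" using assms(1) t unfolding F_system_def X_def Y_def by auto
  have cX: "t \<le> card X" unfolding X_def
    using card_ge[OF assms(1), of t "2*t" A U] XA fin t unfolding U_def X_def by auto
  have cY: "t \<le> card Y" unfolding Y_def
    using card_ge[OF assms(1), of t "2*t" B U] YB fin t unfolding U_def Y_def by auto
  have GA: "F A (2*t) (2*t) \<subseteq> FA" unfolding FA_def using t by (intro sub_Fu) auto
  have GB: "F B (2*t) (2*t) \<subseteq> FB" unfolding FB_def using t by (intro sub_Fu) auto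
  have "2*t \<le> card (F A (2*t) (2*t))"
    using card_ge[OF assms(1), of "2*t" "2*t" A U] GA fin t unfolding U_def by auto
  also have "\<dots> \<le> card FA" using GA finA by (intro card_mono) auto
  finally have cA: "2*t \<le> card FA" .
  have "2*t \<le> card (F B (2*t) (2*t))"
    using card_ge[OF assms(1), of "2*t" "2*t" B U] GB fin t unfolding U_def by auto
  also have "\<dots> \<le> card FB" using GB finA by (intro card_mono) auto
  finally have cB: "2*t \<le> card FB" .
  have S2eq: "S2 F t = FA \<inter> FB \<inter> (X \<union> Y)"
    unfolding S2_def S_def FA_def FB_def X_def Y_def by auto
  have un: "card FA + card FB = card U + card (FA \<inter> FB)"
    unfolding U_def using finA card_Un_Int by blast
  have finXY: "finite (X \<union> Y)" using XA YB finA finite_subset by blast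
  have cXY: "card (X \<union> Y) = card X + card Y" using XY finXY card_Un_disjoint by auto
  have sub: "(X \<union> Y) - S2 F t \<subseteq> U - (FA \<inter> FB)"
    unfolding S2eq U_def using XA YB by auto
  have "card ((X \<union> Y) - S2 F t) \<le> card (U - (FA \<inter> FB))"
    using sub fin by (intro card_mono) auto
  moreover have "card ((X \<union> Y) - S2 F t) \<ge> card (X \<union> Y) - card (S2 F t)"
    by (rule diff_card_le_card_Diff) (use finXY finA in \<open>auto simp: S2eq\<close>)
  moreover have "card (U - (FA \<inter> FB)) = card U - card (FA \<inter> FB)"
    using fin by (intro card_Diff_subset) (auto simp: U_def)
  moreover have "card (FA \<inter> FB) \<le> card U" using fin by (intro card_mono) (auto simp: U_def)
  ultimately have key: "6*t \<le> 2 * card U + card (S2 F t)"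
    using un cXY cX cY cA cB by linarith
  hence "real (6*t) \<le> real (2 * card U + card (S2 F t))" by linarith
  hence "6 * real t \<le> 2 * real (card U) + real (card (S2 F t))" by simp
  thus "real (card (S2 F t)) \<ge> (6 - 4*R) * real t - 2*lam"
    using bnd by (simp add: algebra_simps)
qed

end
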